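(* Let $n\in\{2,3\}$, $d\ge1$, $p\in\mathcal H(n,d)$, let $P=S\cdot Q$ be the induced homogeneous polynomial and $K$ the support of the Newton diagram of $Q$. Then $K$ has no overhang.
   Context: $s(x)=x_1+\dots+x_n$. $\mathcal H(n,d)$ is the set of $p\in\mathbb R[x_1,\dots,x_n]$ of degree $d$ with all coefficients nonnegative and $p(x)=1$ whenever $s(x)=1$. Writing $p=\sum_{k=0}^dp_k$ with $p_k$ homogeneous of degree $k$, the induced homogeneous polynomial is $P(X_0,\dots,X_n)=\sum_{k=0}^dp_k(X_1,\dots,X_n)(-X_0)^{d-k}-(-X_0)^d$; it vanishes where $S(X)=X_0+\dots+X_n=0$, so $P=SQ$. The Newton diagram of $Q$ assigns to $m\in\mathbb Z^n$ the value $P$, $0$, or $N$ according as the coefficient of $X_0^{d-1-|m|}X_1^{m_1}\cdots X_n^{m_n}$ in $Q$ is positive, zero (including when some exponent is negative), or negative ($|m|=m_1+\dots+m_n$); its support $K$ is the set of $m$ with nonzero value. Overhangs: for $K\subset\mathbb Z^2$, a point $(a,b)\in K$ with $(a,b)\ne(0,0)$ is a left overhang if $(a,b-1)\notin K$ and $(a-1,y)\notin K$ for all $y\ge b$; it is a right overhang if $(a-1,b)\notin K$ and $(x,b-1)\notin K$ for all $x\ge a$; an overhang is a left or right overhang. For $K\subset\mathbb Z^3$ define $\pi_1(m)=(m_1,m_2+m_3)$, $\pi_2(m)=(m_1+m_3,m_2)$, $\pi_3(m)=(m_1+m_2,m_3)$; $m\in K$ is an overhang if $\pi_j(m)$ is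 an overhang of $\pi_j(K)$ for some $j$. *)

theory Defs
  imports Complex_Main "HOL-Library.Poly_Mapping"
begin

text \<open>Multivariate real polynomials in variables X_0, X_1, X_2, ... are represented as
  finitely supported maps from monomials (exponent vectors nat =>0 nat) to coefficients.\<close>

type_synonym mpoly = "(nat \<Rightarrow>\<^sub>0 nat) \<Rightarrow>\<^sub>0 real"

definition Var :: "nat \<Rightarrow> mpoly" where
  "Var i = Poly_Mapping.single (Poly_Mapping.single i 1) 1"

definition tdeg :: "(nat \<Rightarrow>\<^sub>0 nat) \<Rightarrow> nat" where
  "tdeg m = (\<Sum>i\<in>Poly_Mapping.keys m. Poly_Mapping.lookup m i)"

definition peval :: "mpoly \<Rightarrow> (nat \<Rightarrow> real) \<Rightarrow> real" where
  "peval p x = (\<Sum>m\<in>Poly_Mapping.keys p. Poly_Mapping.lookup p m * (\<Prod>i\<in>Poly_Mapping.keys m. x i ^ Poly_Mapping.lookup m i))"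

definition in_vars_deg :: "nat \<Rightarrow> nat \<Rightarrow> mpoly \<Rightarrow> bool" where
  "in_vars_deg n d p \<longleftrightarrow> (\<forall>m\<in>Poly_Mapping.keys p. Poly_Mapping.keys m \<subseteq> {1..n} \<and> tdeg m \<le> d)
                         \<and> (\<exists>m\<in>Poly_Mapping.keys p. tdeg m = d)"

definition Hclass :: "nat \<Rightarrow> nat \<Rightarrow> mpoly set" where
  "Hclass n d = {p. in_vars_deg n d p \<and> (\<forall>m. Poly_Mapping.lookup p m \<ge> 0)
      \<and> (\<forall>x::nat \<Rightarrow> real. (\<Sum>i=1..n. x i) = 1 \<longrightarrow> peval p x = 1)}"

definition hpart :: "nat \<Rightarrow> mpoly \<Rightarrow> mpoly" where
  "hpart k p = (\<Sum>m\<in>{m\<in>Poly_Mapping.keys p. tdeg m = k}. Poly_Mapping.single m (Poly_Mapping.lookup p m))"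

definition induced :: "nat \<Rightarrow> mpoly \<Rightarrow> mpoly" where
  "induced d p = (\<Sum>k=0..d. hpart k p * (- Var 0) ^ (d - k)) - (- Var 0) ^ d"

definition Ssum :: "nat \<Rightarrow> mpoly" where
  "Ssum n = (\<Sum>i=0..n. Var i)"

text \<open>Coefficient of X_0^(d-1-|m|) X_1^(m_1) ... X_n^(m_n) in Q, zero if some exponent negative\<close>
definition ndcoeff :: "nat \<Rightarrow> mpoly \<Rightarrow> (nat \<Rightarrow> int) \<Rightarrow> nat \<Rightarrow> real" where
  "ndcoeff d Q m n =
     (if (\<forall>i\<in>{1..n}. m i \<ge> 0) \<and> (\<Sum>i=1..n. m i) \<le> int d - 1
      then Poly_Mapping.lookup Q (Poly_Mapping.single 0 (nat (int d - 1 - (\<Sum>i=1..n. m i)))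
                     + (\<Sum>i=1..n. Poly_Mapping.single i (nat (m i))))
      else 0)"

definition K2 :: "nat \<Rightarrow> mpoly \<Rightarrow> (int \<times> int) set" where
  "K2 d Q = {(a, b). ndcoeff d Q (\<lambda>i. if i = 1 then a else if i = 2 then b else 0) 2 \<noteq> 0}"

definition K3 :: "nat \<Rightarrow> mpoly \<Rightarrow> (int \<times> int \<times> int) set" where
  "K3 d Q = {(a, b, c). ndcoeff d Q
     (\<lambda>i. if i = 1 then a else if i = 2 then b else if i = 3 then c else 0) 3 \<noteq> 0}"

definition left_overhang :: "(int \<times> int) set \<Rightarrow> int \<times> int \<Rightarrow> bool" where
  "left_overhang K z = (case z of (a, b) \<Rightarrow>
     (a, b) \<in> K \<and> (a, b) \<noteq> (0, 0) \<and> (a, b - 1) \<notin> K \<and> (\<forall>y\<ge>b. (a - 1, y) \<notin> K))"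

definition right_overhang :: "(int \<times> int) set \<Rightarrow> int \<times> int \<Rightarrow> bool" where
  "right_overhang K z = (case z of (a, b) \<Rightarrow>
     (a, b) \<in> K \<and> (a, b) \<noteq> (0, 0) \<and> (a - 1, b) \<notin> K \<and> (\<forall>x\<ge>a. (x, b - 1) \<notin> K))"

definition overhang2 :: "(int \<times> int) set \<Rightarrow> int \<times> int \<Rightarrow> bool" where
  "overhang2 K z \<longleftrightarrow> left_overhang K z \<or> right_overhang K z"

definition proj1 :: "int \<times> int \<times> int \<Rightarrow> int \<times> int" where
  "proj1 m = (case m of (m1, m2, m3) \<Rightarrow> (m1, m2 + m3))"
definition proj2 :: "int \<times> int \<times> int \<Rightarrow> int \<times> int" where
  "proj2 m = (case m of (m1, m2, m3) \<Rightarrow> (m1 + m3, m2))"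
definition proj3 :: "int \<times> int \<times> int \<Rightarrow> int \<times> int" where
  "proj3 m = (case m of (m1, m2, m3) \<Rightarrow> (m1 + m2, m3))"

definition overhang3 :: "(int \<times> int \<times> int) set \<Rightarrow> int \<times> int \<times> int \<Rightarrow> bool" where
  "overhang3 K m \<longleftrightarrow> m \<in> K \<and>
     (overhang2 (proj1 ` K) (proj1 m) \<or> overhang2 (proj2 ` K) (proj2 m)
      \<or> overhang2 (proj3 ` K) (proj3 m))"

end

theory Submission
  imports Defs
begin

definition dl :: "nat \<Rightarrow> nat \<Rightarrow> int" where "dl i = (\<lambda>j. if j = i then 1 else 0)"

lemma sum_minus_dl: "finite S \<Longrightarrow> (\<Sum>j\<in>S. (m - dl i) j) = (\<Sum>j\<in>S. m j) - (if i \<in> S then 1 else 0)"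
  by (simp add: dl_def sum_subtractf)

definition shift :: "(nat \<Rightarrow> int) \<Rightarrow> nat \<Rightarrow> nat \<Rightarrow> nat \<Rightarrow> int" where
  "shift m j k = (\<lambda>i. m i + (if i = j then int k else 0))"

lemma sum_shift: "finite S \<Longrightarrow> (\<Sum>i\<in>S. shift m j k i) = (\<Sum>i\<in>S. m i) + (if j \<in> S then int k else 0)"
  by (simp add: shift_def sum.distrib)

lemma shift_0: "shift m j 0 = m" by (auto simp: shift_def fun_eq_iff)

lemma shift_Suc_minus: "shift m j (Suc k) - dl j = shift m j k"
  by (auto simp: shift_def dl_def fun_eq_iff)

lemma slab:
  fixes T :: "(nat \<Rightarrow> int) \<Rightarrow> real" and I A B :: "nat set" and a b :: int and d :: nat
  assumes fin: "finite I" and AB: "A \<union> B = I" "A \<inter> B = {}" and jB: "j \<in> B"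
    and R0: "\<And>m. (\<exists>i\<in>I. m i < 0) \<or> int d \<le> (\<Sum>i\<in>I. m i) \<Longrightarrow> T m = 0"
    and R1: "\<And>m. \<forall>i\<in>I. 0 \<le> m i \<Longrightarrow> (\<Sum>i\<in>I. m i) \<le> int d \<Longrightarrow> (\<exists>i\<in>I. m i \<noteq> 0)
               \<Longrightarrow> (\<Sum>i\<in>I. T (m - dl i)) \<le> T m"
    and HL: "\<And>m. (\<Sum>i\<in>A. m i) = a - 1 \<Longrightarrow> b \<le> (\<Sum>i\<in>B. m i) \<Longrightarrow> T m = 0"
    and HD: "\<And>m. (\<Sum>i\<in>A. m i) = a \<Longrightarrow> (\<Sum>i\<in>B. m i) = b - 1 \<Longrightarrow> T m = 0"
    and m0: "(\<Sum>i\<in>A. m0 i) = a" "(\<Sum>i\<in>B. m0 i) = b" and ab: "(a, b) \<noteq> (0, 0)"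
  shows "T m0 = 0"
proof (rule ccontr)
  assume T0: "T m0 \<noteq> 0"
  have finA: "finite A" and finB: "finite B" using fin AB by auto
  have sumI: "\<And>m. (\<Sum>i\<in>I. m i) = (\<Sum>i\<in>A. m i) + (\<Sum>i\<in>B. m i)"
    using AB finA finB by (metis sum.union_disjoint)
  have nz: "\<forall>i\<in>I. 0 \<le> m i" "(\<Sum>i\<in>I. m i) < int d" if "T m \<noteq> 0" for m
    using R0 that by force+
  have m0nn: "\<forall>i\<in>I. 0 \<le> m0 i" using nz T0 by blast
  have a0: "0 \<le> a" using m0 m0nn AB by (metis Un_iff sum_nonneg)
  have b0: "0 \<le> b" using m0 m0nn AB by (metis Un_iff sum_nonneg)
  have abpos: "0 < a + b" using a0 b0 ab by auto
  have nonzero: "\<exists>i\<in>I. m i \<noteq> 0" if "(\<Sum>i\<in>A. m i) = a" "b \<le> (\<Sum>i\<in>B. m i)" for m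
  proof (rule ccontr)
    assume "\<not> (\<exists>i\<in>I. m i \<noteq> 0)"
    then have "(\<Sum>i\<in>I. m i) = 0" by simp
    then show False using sumI[of m] that abpos by linarith
  qed
  have dA: "(\<Sum>i'\<in>A. (m - dl i) i') = (\<Sum>i'\<in>A. m i') - (if i \<in> A then 1 else 0)" for m i
    using sum_minus_dl[OF finA] .
  have dB: "(\<Sum>i'\<in>B. (m - dl i) i') = (\<Sum>i'\<in>B. m i') - (if i \<in> B then 1 else 0)" for m i
    using sum_minus_dl[OF finB] .
  have C1: "\<forall>m. (\<Sum>i\<in>A. m i) = a \<longrightarrow> (\<Sum>i\<in>B. m i) = b + int k \<longrightarrow> 0 \<le> T m" for k
  proof (induction k)
    case 0
    show ?case
    proof (intro allI impI)
      fix m assume u: "(\<Sum>i\<in>A. m i) = a" and v: "(\<Sum>i\<in>B. m i) = b + int 0"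
      show "0 \<le> T m"
      proof (cases "T m = 0")
        case False
        have "\<forall>i\<in>I. T (m - dl i) = 0"
        proof
          fix i assume "i \<in> I"
          then have "i \<in> A \<and> i \<notin> B \<or> i \<in> B \<and> i \<notin> A" using AB by auto
          then show "T (m - dl i) = 0"
            using HL[of "m - dl i"] HD[of "m - dl i"] dA[of m i] dB[of m i] u v by auto
        qed
        then have "(\<Sum>i\<in>I. T (m - dl i)) = 0" by simp
        moreover have "(\<Sum>i\<in>I. T (m - dl i)) \<le> T m"
          using R1[of m] nz[OF False] nonzero[of m] u v by auto
        ultimately show ?thesis by simp
      qed simp
    qed
  next
    case (Suc k)
    show ?case
    proof (intro allI impI)
      fix m assume u: "(\<Sum>i\<in>A. m i) = a" and v: "(\<Sum>i\<in>B. m i) = b + int (Suc k)"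
      show "0 \<le> T m"
      proof (cases "T m = 0")
        case False
        have "\<forall>i\<in>I. 0 \<le> T (m - dl i)"
        proof
          fix i assume "i \<in> I"
          then have "i \<in> A \<and> i \<notin> B \<or> i \<in> B \<and> i \<notin> A" using AB by auto
          then show "0 \<le> T (m - dl i)"
          proof
            assume "i \<in> A \<and> i \<notin> B"
            then show ?thesis using HL[of "m - dl i"] dA[of m i] dB[of m i] u v by auto
          next
            assume "i \<in> B \<and> i \<notin> A"
            then show ?thesis using Suc.IH dA[of m i] dB[of m i] u v by auto
          qed
        qed
        then have "0 \<le> (\<Sum>i\<in>I. T (m - dl i))" by (simp add: sum_nonneg)
        moreover have "(\<Sum>i\<in>I. T (m - dl i)) \<le> T m"
          using R1[of m] nz[OF False] nonzero[of m] u v by auto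
        ultimately show ?thesis by simp
      qed simp
    qed
  qed
  have C1': "0 \<le> T m" if "(\<Sum>i\<in>A. m i) = a" "b \<le> (\<Sum>i\<in>B. m i)" for m
    using C1[of "nat ((\<Sum>i\<in>B. m i) - b)"] that by auto
  have jA: "j \<notin> A" "j \<in> I" using jB AB by auto
  have C2: "(\<Sum>i\<in>I. m0 i) + int k \<le> int d \<longrightarrow> T m0 \<le> T (shift m0 j k)" for k
  proof (induction k)
    case 0
    then show ?case by (simp add: shift_0)
  next
    case (Suc k)
    show ?case
    proof
      assume le: "(\<Sum>i\<in>I. m0 i) + int (Suc k) \<le> int d"
      let ?m = "shift m0 j (Suc k)"
      have uA: "(\<Sum>i\<in>A. ?m i) = a" using sum_shift[OF finA] m0 jA by simp
      have vB: "(\<Sum>i\<in>B. ?m i) = b + int (Suc k)" using sum_shift[OF finB] m0 jB by simp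
      have sI: "(\<Sum>i\<in>I. ?m i) = (\<Sum>i\<in>I. m0 i) + int (Suc k)" using sum_shift[OF fin] jA by simp
      have nn: "\<forall>i\<in>I. 0 \<le> ?m i" using m0nn by (auto simp: shift_def)
      have "\<forall>i\<in>I. 0 \<le> T (?m - dl i)"
      proof
        fix i assume "i \<in> I"
        then have "i \<in> A \<and> i \<notin> B \<or> i \<in> B \<and> i \<notin> A" using AB by auto
        then show "0 \<le> T (?m - dl i)"
        proof
          assume "i \<in> A \<and> i \<notin> B"
          then show ?thesis using HL[of "?m - dl i"] dA[of ?m i] dB[of ?m i] uA vB b0 by auto
        next
          assume "i \<in> B \<and> i \<notin> A"
          then show ?thesis using C1'[of "?m - dl i"] dA[of ?m i] dB[of ?m i] uA vB by auto
        qed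
      qed
      then have "T (?m - dl j) \<le> (\<Sum>i\<in>I. T (?m - dl i))"
        using member_le_sum[OF jA(2) _ fin, of "\<lambda>i. T (?m - dl i)"] by blast
      also have "\<dots> \<le> T ?m"
        using R1[of ?m] nn sI le nonzero[of ?m] uA vB by auto
      finally have "T (shift m0 j k) \<le> T ?m" unfolding shift_Suc_minus .
      moreover have "T m0 \<le> T (shift m0 j k)" using Suc.IH le by simp
      ultimately show "T m0 \<le> T ?m" by simp
    qed
  qed
  define k where "k = nat (int d - (\<Sum>i\<in>I. m0 i))"
  have lt: "(\<Sum>i\<in>I. m0 i) < int d" using nz T0 by blast
  have sk: "(\<Sum>i\<in>I. m0 i) + int k = int d" using lt unfolding k_def by simp
  have "T (shift m0 j k) = 0"
    using R0[of "shift m0 j k"] sum_shift[OF fin, of m0 j k] jA sk by simp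
  moreover have "0 \<le> T m0" using C1'[of m0] m0 by simp
  moreover have "T m0 \<le> T (shift m0 j k)" using C2[of k] sk by simp
  ultimately show False using T0 by simp
qed

lemma no_overhang_generic:
  fixes T :: "(nat \<Rightarrow> int) \<Rightarrow> real" and I A B :: "nat set" and d :: nat and L :: "(int \<times> int) set"
  assumes fin: "finite I" and AB: "A \<union> B = I" "A \<inter> B = {}" and ne: "A \<noteq> {}" "B \<noteq> {}"
    and R0: "\<And>m. (\<exists>i\<in>I. m i < 0) \<or> int d \<le> (\<Sum>i\<in>I. m i) \<Longrightarrow> T m = 0"
    and R1: "\<And>m. \<forall>i\<in>I. 0 \<le> m i \<Longrightarrow> (\<Sum>i\<in>I. m i) \<le> int d \<Longrightarrow> (\<exists>i\<in>I. m i \<noteq> 0)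
               \<Longrightarrow> (\<Sum>i\<in>I. T (m - dl i)) \<le> T m"
    and inL: "\<And>m. T m \<noteq> 0 \<Longrightarrow> ((\<Sum>i\<in>A. m i), (\<Sum>i\<in>B. m i)) \<in> L"
    and T0: "T m0 \<noteq> 0"
  shows "\<not> overhang2 L ((\<Sum>i\<in>A. m0 i), (\<Sum>i\<in>B. m0 i))"
proof
  assume "overhang2 L ((\<Sum>i\<in>A. m0 i), (\<Sum>i\<in>B. m0 i))"
  then consider (l) "left_overhang L ((\<Sum>i\<in>A. m0 i), (\<Sum>i\<in>B. m0 i))"
    | (r) "right_overhang L ((\<Sum>i\<in>A. m0 i), (\<Sum>i\<in>B. m0 i))"
    unfolding overhang2_def by blast
  then show False
  proof cases
    case l
    obtain j where jB: "j \<in> B" using ne by blast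
    have "T m0 = 0"
    proof (rule slab[OF fin AB jB R0 R1, where a="\<Sum>i\<in>A. m0 i" and b="\<Sum>i\<in>B. m0 i"])
      fix m assume "(\<Sum>i\<in>A. m i) = (\<Sum>i\<in>A. m0 i) - 1" "(\<Sum>i\<in>B. m0 i) \<le> (\<Sum>i\<in>B. m i)"
      then show "T m = 0" using l inL[of m] unfolding left_overhang_def by force
    next
      fix m assume "(\<Sum>i\<in>A. m i) = (\<Sum>i\<in>A. m0 i)" "(\<Sum>i\<in>B. m i) = (\<Sum>i\<in>B. m0 i) - 1"
      then show "T m = 0" using l inL[of m] unfolding left_overhang_def by force
    next
      show "((\<Sum>i\<in>A. m0 i), (\<Sum>i\<in>B. m0 i)) \<noteq> (0, 0)" using l unfolding left_overhang_def by simp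
    qed auto
    then show False using T0 by simp
  next
    case r
    obtain j where jA: "j \<in> A" using ne by blast
    have AB': "B \<union> A = I" "B \<inter> A = {}" using AB by auto
    have "T m0 = 0"
    proof (rule slab[OF fin AB' jA R0 R1, where a="\<Sum>i\<in>B. m0 i" and b="\<Sum>i\<in>A. m0 i"])
      fix m assume "(\<Sum>i\<in>B. m i) = (\<Sum>i\<in>B. m0 i) - 1" "(\<Sum>i\<in>A. m0 i) \<le> (\<Sum>i\<in>A. m i)"
      then show "T m = 0" using r inL[of m] unfolding right_overhang_def by force
    next
      fix m assume "(\<Sum>i\<in>B. m i) = (\<Sum>i\<in>B. m0 i)" "(\<Sum>i\<in>A. m i) = (\<Sum>i\<in>A. m0 i) - 1"
      then show "T m = 0" using r inL[of m] unfolding right_overhang_def by force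
    next
      show "((\<Sum>i\<in>B. m0 i), (\<Sum>i\<in>A. m0 i)) \<noteq> (0, 0)" using r unfolding right_overhang_def by auto
    qed auto
    then show False using T0 by simp
  qed
qed

lemma lookup_single_mult:
  fixes \<mu> \<alpha> :: "nat \<Rightarrow>\<^sub>0 nat"
  shows "Poly_Mapping.lookup (Poly_Mapping.single \<mu> (c::real) * q) \<alpha> =
     (if (\<exists>r. \<alpha> = \<mu> + r) then c * Poly_Mapping.lookup q (\<alpha> - \<mu>) else 0)"
proof -
  have 1: "Poly_Mapping.lookup (Poly_Mapping.single \<mu> (c::real) * q) \<alpha> =
     c * (\<Sum>r. Poly_Mapping.lookup q r when \<alpha> = \<mu> + r)"
    unfolding lookup_mult lookup_single
    by (simp only: when_mult Sum_any_when_equal')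
  show ?thesis
  proof (cases "\<exists>r. \<alpha> = \<mu> + r")
    case True
    then obtain r0 where r0: "\<alpha> = \<mu> + r0" by blast
    have "(\<Sum>r. Poly_Mapping.lookup q r when \<alpha> = \<mu> + r) = (\<Sum>r. Poly_Mapping.lookup q r when r = r0)"
    proof -
      have e: "\<And>x. (\<alpha> = \<mu> + x) = (x = r0)" unfolding r0 add_left_cancel by (rule eq_commute)
      show ?thesis unfolding e ..
    qed
    also have "\<dots> = Poly_Mapping.lookup q r0" by simp
    finally show ?thesis using 1 True r0 by (simp add: add_diff_cancel_left')
  next
    case False
    then have "(\<Sum>r. Poly_Mapping.lookup q r when \<alpha> = \<mu> + r) = 0" by simp
    then show ?thesis using 1 False by simp
  qed
qed

lemma exists_add_single_iff:
  "(\<exists>r. (\<alpha>::nat\<Rightarrow>\<^sub>0nat) = Poly_Mapping.single i f + r) \<longleftrightarrow> f \<le> Poly_Mapping.lookup \<alpha> i"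
proof
  assume "\<exists>r. \<alpha> = Poly_Mapping.single i f + r"
  then obtain r where "\<alpha> = Poly_Mapping.single i f + r" by blast
  then show "f \<le> Poly_Mapping.lookup \<alpha> i" by (simp add: lookup_add)
next
  assume a: "f \<le> Poly_Mapping.lookup \<alpha> i"
  have "\<alpha> = Poly_Mapping.single i f + (\<alpha> - Poly_Mapping.single i f)"
    by (rule poly_mapping_eqI) (use a in \<open>auto simp: lookup_add lookup_minus lookup_single when_def\<close>)
  then show "\<exists>r. \<alpha> = Poly_Mapping.single i f + r" by blast
qed

lemma lookup_single_mult':
  fixes \<alpha> :: "nat \<Rightarrow>\<^sub>0 nat"
  shows "Poly_Mapping.lookup (Poly_Mapping.single (Poly_Mapping.single i f) (c::real) * q) \<alpha> =
     (if f \<le> Poly_Mapping.lookup \<alpha> i then c * Poly_Mapping.lookup q (\<alpha> - Poly_Mapping.single i f) else 0)"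
  using exists_add_single_iff[of \<alpha> i f] lookup_single_mult[of "Poly_Mapping.single i f" c q \<alpha>] by simp

lemma lookup_Var_mult:
  "Poly_Mapping.lookup (Var i * q) \<alpha> =
     (if 1 \<le> Poly_Mapping.lookup \<alpha> i then Poly_Mapping.lookup q (\<alpha> - Poly_Mapping.single i 1) else 0)"
  unfolding Var_def lookup_single_mult' by simp

lemma lookup_Ssum_mult:
  "Poly_Mapping.lookup (Ssum n * q) \<alpha> =
     (\<Sum>i=0..n. if 1 \<le> Poly_Mapping.lookup \<alpha> i then Poly_Mapping.lookup q (\<alpha> - Poly_Mapping.single i 1) else 0)"
  unfolding Ssum_def sum_distrib_right lookup_sum lookup_Var_mult ..

lemma negVar0_power: "(- Var 0) ^ e = Poly_Mapping.single (Poly_Mapping.single 0 e) ((-1::real) ^ e)"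
proof (induction e)
  case 0 then show ?case by simp
next
  case (Suc e)
  have "(- Var 0) ^ Suc e = Poly_Mapping.single (Poly_Mapping.single 0 e) ((-1::real) ^ e) * (- Var 0)"
    using Suc by (simp add: power_Suc2)
  also have "\<dots> = Poly_Mapping.single (Poly_Mapping.single 0 e + Poly_Mapping.single 0 1) ((-1::real) ^ e * (-1))"
    unfolding Var_def single_uminus[symmetric] mult_single ..
  also have "\<dots> = Poly_Mapping.single (Poly_Mapping.single 0 (Suc e)) ((-1::real) ^ Suc e)"
    by (simp add: single_add[symmetric])
  finally show ?case .
qed

lemma lookup_hpart: "Poly_Mapping.lookup (hpart k p) \<mu> = (if tdeg \<mu> = k then Poly_Mapping.lookup p \<mu> else 0)"
proof -
  have "Poly_Mapping.lookup (hpart k p) \<mu> = (\<Sum>m\<in>{m\<in>Poly_Mapping.keys p. tdeg m = k}. Poly_Mapping.lookup p m when m = \<mu>)"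
    unfolding hpart_def lookup_sum lookup_single by simp
  also have "\<dots> = (if tdeg \<mu> = k then Poly_Mapping.lookup p \<mu> else 0)"
    by (auto simp: when_def in_keys_iff)
  finally show ?thesis .
qed

definition mono :: "nat \<Rightarrow> (nat \<Rightarrow> int) \<Rightarrow> (nat \<Rightarrow>\<^sub>0 nat)" where
  "mono n m = (\<Sum>i=1..n. Poly_Mapping.single i (nat (m i)))"

lemma lookup_mono: "Poly_Mapping.lookup (mono n m) j = (if j \<in> {1..n} then nat (m j) else 0)"
  unfolding mono_def lookup_sum lookup_single by (auto simp: when_def)

lemma lookup_alpha: "Poly_Mapping.lookup (Poly_Mapping.single 0 e + mono n m) j =
   (if j = 0 then e else if j \<in> {1..n} then nat (m j) else 0)"
  by (auto simp: lookup_add lookup_mono lookup_single when_def)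

lemma ndcoeff_alt: "ndcoeff d Q m n =
     (if (\<forall>i\<in>{1..n}. m i \<ge> 0) \<and> (\<Sum>i=1..n. m i) \<le> int d - 1
      then Poly_Mapping.lookup Q (Poly_Mapping.single 0 (nat (int d - 1 - (\<Sum>i=1..n. m i))) + mono n m)
      else 0)"
  unfolding ndcoeff_def mono_def ..

lemma Ssum_coeff:
  assumes nn: "\<forall>i\<in>{1..n}. 0 \<le> m i" and le: "(\<Sum>i=1..n. m i) \<le> int d"
  shows "Poly_Mapping.lookup (Ssum n * Q) (Poly_Mapping.single 0 (nat (int d - (\<Sum>i=1..n. m i))) + mono n m)
     = ndcoeff d Q m n + (\<Sum>i=1..n. ndcoeff d Q (m - dl i) n)"
proof -
  define s where "s = (\<Sum>i=1..n. m i)"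
  define \<alpha> where "\<alpha> = Poly_Mapping.single 0 (nat (int d - s)) + mono n m"
  have la: "Poly_Mapping.lookup \<alpha> j = (if j = 0 then nat (int d - s) else if j \<in> {1..n} then nat (m j) else 0)" for j
    unfolding \<alpha>_def lookup_alpha ..
  have t0: "(if 1 \<le> Poly_Mapping.lookup \<alpha> 0 then Poly_Mapping.lookup Q (\<alpha> - Poly_Mapping.single 0 1) else 0)
      = ndcoeff d Q m n"
  proof (cases "s < int d")
    case True
    have "\<alpha> - Poly_Mapping.single 0 1 = Poly_Mapping.single 0 (nat (int d - 1 - s)) + mono n m"
      by (rule poly_mapping_eqI) (use True in \<open>auto simp: lookup_minus la lookup_alpha lookup_single when_def\<close>)
    then show ?thesis using True nn la[of 0] unfolding ndcoeff_alt s_def by auto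
  next
    case False
    then show ?thesis using la[of 0] unfolding ndcoeff_alt s_def by auto
  qed
  have ti: "(if 1 \<le> Poly_Mapping.lookup \<alpha> i then Poly_Mapping.lookup Q (\<alpha> - Poly_Mapping.single i 1) else 0)
      = ndcoeff d Q (m - dl i) n" if i: "i \<in> {1..n}" for i
  proof -
    have sm: "(\<Sum>j=1..n. (m - dl i) j) = s - 1" using sum_minus_dl[of "{1..n}" m i] i s_def by simp
    show ?thesis
    proof (cases "1 \<le> m i")
      case True
      have nn': "\<forall>j\<in>{1..n}. 0 \<le> (m - dl j') j" if "j' = i" for j'
        using nn True that by (auto simp: dl_def)
      have "\<alpha> - Poly_Mapping.single i 1 = Poly_Mapping.single 0 (nat (int d - 1 - (s - 1))) + mono n (m - dl i)"
        by (rule poly_mapping_eqI) (use True i in \<open>auto simp: lookup_minus la lookup_alpha lookup_single when_def dl_def nat_diff_distrib\<close>)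
      then show ?thesis using True nn'[of i] la[of i] i le sm unfolding ndcoeff_alt s_def by auto
    next
      case False
      then have "m i = 0" using nn i by force
      then have "(m - dl i) i < 0" by (simp add: dl_def)
      then have "\<not> (\<forall>j\<in>{1..n}. 0 \<le> (m - dl i) j)" using i by force
      then have "ndcoeff d Q (m - dl i) n = 0" unfolding ndcoeff_alt by (simp only: if_False de_Morgan_conj) auto
      then show ?thesis using False la[of i] i by simp
    qed
  qed
  have "Poly_Mapping.lookup (Ssum n * Q) \<alpha> =
     (\<Sum>i=0..n. if 1 \<le> Poly_Mapping.lookup \<alpha> i then Poly_Mapping.lookup Q (\<alpha> - Poly_Mapping.single i 1) else 0)"
    by (rule lookup_Ssum_mult)
  also have "\<dots> = (if 1 \<le> Poly_Mapping.lookup \<alpha> 0 then Poly_Mapping.lookup Q (\<alpha> - Poly_Mapping.single 0 1) else 0)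
     + (\<Sum>i=1..n. if 1 \<le> Poly_Mapping.lookup \<alpha> i then Poly_Mapping.lookup Q (\<alpha> - Poly_Mapping.single i 1) else 0)"
    by (simp add: sum.atLeast_Suc_atMost)
  also have "\<dots> = ndcoeff d Q m n + (\<Sum>i=1..n. ndcoeff d Q (m - dl i) n)"
    using t0 ti by simp
  finally show ?thesis unfolding \<alpha>_def s_def .
qed

lemma tdeg_mono:
  assumes nn: "\<forall>i\<in>{1..n}. 0 \<le> m i"
  shows "int (tdeg (mono n m)) = (\<Sum>i=1..n. m i)"
proof -
  have sub: "Poly_Mapping.keys (mono n m) \<subseteq> {1..n}"
    by (auto simp: in_keys_iff lookup_mono split: if_splits)
  have "tdeg (mono n m) = (\<Sum>i\<in>{1..n}. Poly_Mapping.lookup (mono n m) i)"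
    unfolding tdeg_def by (rule sum.mono_neutral_left) (use sub in \<open>auto simp: in_keys_iff\<close>)
  also have "\<dots> = (\<Sum>i\<in>{1..n}. nat (m i))" by (simp add: lookup_mono)
  finally have "int (tdeg (mono n m)) = (\<Sum>i\<in>{1..n}. int (nat (m i)))" by simp
  also have "\<dots> = (\<Sum>i\<in>{1..n}. m i)" using nn by (intro sum.cong) auto
  finally show ?thesis .
qed

lemma induced_coeff:
  assumes p: "p \<in> Hclass n d" and nn: "\<forall>i\<in>{1..n}. 0 \<le> m i" and le: "(\<Sum>i=1..n. m i) \<le> int d"
  shows "Poly_Mapping.lookup (induced d p) (Poly_Mapping.single 0 (nat (int d - (\<Sum>i=1..n. m i))) + mono n m)
     = (-1) ^ nat (int d - (\<Sum>i=1..n. m i)) * Poly_Mapping.lookup p (mono n m)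
       - (if \<forall>i\<in>{1..n}. m i = 0 then (-1) ^ d else 0)"
proof -
  define s where "s = (\<Sum>i=1..n. m i)"
  have s0: "0 \<le> s" unfolding s_def using nn by (intro sum_nonneg) auto
  define sn where "sn = nat s"
  have ssn: "s = int sn" and snd: "sn \<le> d" using s0 le unfolding sn_def s_def by auto
  define \<alpha> where "\<alpha> = Poly_Mapping.single 0 (nat (int d - s)) + mono n m"
  have la: "Poly_Mapping.lookup \<alpha> j = (if j = 0 then d - sn else if j \<in> {1..n} then nat (m j) else 0)" for j
    unfolding \<alpha>_def lookup_alpha ssn using snd by (simp add: of_nat_diff[symmetric] del: of_nat_diff)
  have keysp: "\<And>\<mu>. \<mu> \<in> Poly_Mapping.keys p \<Longrightarrow> Poly_Mapping.keys \<mu> \<subseteq> {1..n}"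
    using p unfolding Hclass_def in_vars_deg_def by blast
  have tdm: "tdeg (mono n m) = sn" using tdeg_mono[OF nn] unfolding s_def[symmetric] ssn by simp
  have trm: "Poly_Mapping.lookup (hpart k p * (- Var 0) ^ (d - k)) \<alpha> =
      (if k = sn then (-1) ^ (d - sn) * Poly_Mapping.lookup p (mono n m) else 0)" if k: "k \<in> {0..d}" for k
  proof -
    have "Poly_Mapping.lookup (hpart k p * (- Var 0) ^ (d - k)) \<alpha> =
        (if d - k \<le> Poly_Mapping.lookup \<alpha> 0 then (-1) ^ (d - k) * Poly_Mapping.lookup (hpart k p) (\<alpha> - Poly_Mapping.single 0 (d - k)) else 0)"
      unfolding negVar0_power mult.commute[of "hpart k p"] lookup_single_mult' ..
    also have "\<dots> = (if k = sn then (-1) ^ (d - sn) * Poly_Mapping.lookup p (mono n m) else 0)"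
    proof (cases "sn \<le> k")
      case True
      have eq: "\<alpha> - Poly_Mapping.single 0 (d - k) = Poly_Mapping.single 0 (k - sn) + mono n m"
        by (rule poly_mapping_eqI) (use True k snd in \<open>auto simp: lookup_minus la lookup_alpha lookup_single when_def\<close>)
      show ?thesis
      proof (cases "k = sn")
        case True
        then show ?thesis using eq la[of 0] snd by (simp add: lookup_hpart tdm)
      next
        case False
        have "0 \<in> Poly_Mapping.keys (Poly_Mapping.single 0 (k - sn) + mono n m)"
          using False True by (simp add: in_keys_iff lookup_alpha)
        then have "Poly_Mapping.single 0 (k - sn) + mono n m \<notin> Poly_Mapping.keys p" using keysp by fastforce
        then have "Poly_Mapping.lookup p (Poly_Mapping.single 0 (k - sn) + mono n m) = 0" by (simp add: in_keys_iff)
        then show ?thesis using eq False by (simp add: lookup_hpart)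
      qed
    next
      case False
      then show ?thesis using la[of 0] k snd by auto
    qed
    finally show ?thesis .
  qed
  have last: "Poly_Mapping.lookup ((- Var 0) ^ d) \<alpha> = (if \<forall>i\<in>{1..n}. m i = 0 then (-1) ^ d else 0)"
  proof (cases "\<forall>i\<in>{1..n}. m i = 0")
    case True
    then have "s = 0" unfolding s_def by simp
    then have "\<alpha> = Poly_Mapping.single 0 d"
      by (intro poly_mapping_eqI) (use True in \<open>auto simp: la lookup_single when_def ssn\<close>)
    then show ?thesis using True by (simp add: negVar0_power)
  next
    case False
    then obtain i where i: "i \<in> {1..n}" "m i \<noteq> 0" by blast
    have "Poly_Mapping.lookup \<alpha> i \<noteq> Poly_Mapping.lookup (Poly_Mapping.single 0 d) i"
      using i nn la[of i] by (force simp: lookup_single when_def)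
    then have "Poly_Mapping.single 0 d \<noteq> \<alpha>" by metis
    then show ?thesis using False by (simp add: negVar0_power lookup_single)
  qed
  have "Poly_Mapping.lookup (induced d p) \<alpha> =
      (\<Sum>k=0..d. Poly_Mapping.lookup (hpart k p * (- Var 0) ^ (d - k)) \<alpha>) - Poly_Mapping.lookup ((- Var 0) ^ d) \<alpha>"
    unfolding induced_def lookup_minus lookup_sum ..
  also have "\<dots> = (\<Sum>k=0..d. (if k = sn then (-1) ^ (d - sn) * Poly_Mapping.lookup p (mono n m) else 0))
      - (if \<forall>i\<in>{1..n}. m i = 0 then (-1) ^ d else 0)"
    using trm last by simp
  also have "\<dots> = (-1) ^ (d - sn) * Poly_Mapping.lookup p (mono n m) - (if \<forall>i\<in>{1..n}. m i = 0 then (-1) ^ d else 0)"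
    using snd by simp
  moreover have "nat (int d - int sn) = d - sn" using snd by (simp add: of_nat_diff[symmetric] del: of_nat_diff)
  ultimately show ?thesis unfolding \<alpha>_def s_def[symmetric] ssn by simp
qed

definition Tf :: "nat \<Rightarrow> mpoly \<Rightarrow> nat \<Rightarrow> (nat \<Rightarrow> int) \<Rightarrow> real" where
  "Tf d Q n m = (-1) ^ nat (int d - (\<Sum>i=1..n. m i)) * ndcoeff d Q m n"

lemma Tf_nz: "Tf d Q n m \<noteq> 0 \<longleftrightarrow> ndcoeff d Q m n \<noteq> 0"
  unfolding Tf_def by simp

lemma Tf_R0: "(\<exists>i\<in>{1..n}. m i < 0) \<or> int d \<le> (\<Sum>i\<in>{1..n}. m i) \<Longrightarrow> Tf d Q n m = 0"
  unfolding Tf_def ndcoeff_def by auto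

lemma Tf_R1:
  assumes p: "p \<in> Hclass n d" and PQ: "induced d p = Ssum n * Q"
    and nn: "\<forall>i\<in>{1..n}. 0 \<le> m i" and le: "(\<Sum>i\<in>{1..n}. m i) \<le> int d" and nz: "\<exists>i\<in>{1..n}. m i \<noteq> 0"
  shows "(\<Sum>i\<in>{1..n}. Tf d Q n (m - dl i)) \<le> Tf d Q n m"
proof -
  define s where "s = (\<Sum>i=1..n. m i)"
  define e where "e = nat (int d - s)"
  have e1: "nat (int d - (s - 1)) = Suc e" using le unfolding e_def s_def by simp
  have eq: "ndcoeff d Q m n + (\<Sum>i=1..n. ndcoeff d Q (m - dl i) n) = (-1) ^ e * Poly_Mapping.lookup p (mono n m)"
    using Ssum_coeff[OF nn le, of Q] induced_coeff[OF p nn le] nz PQ unfolding e_def s_def by auto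
  have pn: "0 \<le> Poly_Mapping.lookup p (mono n m)" using p unfolding Hclass_def by blast
  have sm: "(\<Sum>j=1..n. (m - dl i) j) = s - 1" if "i \<in> {1..n}" for i
    using sum_minus_dl[of "{1..n}" m i] that s_def by simp
  have "(\<Sum>i\<in>{1..n}. Tf d Q n (m - dl i)) = (\<Sum>i\<in>{1..n}. - ((-1) ^ e * ndcoeff d Q (m - dl i) n))"
  proof (intro sum.cong refl)
    fix i assume i: "i \<in> {1..n}"
    have "Tf d Q n (m - dl i) = (-1) ^ nat (int d - (s - 1)) * ndcoeff d Q (m - dl i) n"
      unfolding Tf_def sm[OF i] ..
    then show "Tf d Q n (m - dl i) = - ((-1) ^ e * ndcoeff d Q (m - dl i) n)" unfolding e1 by simp
  qed
  also have "\<dots> = - ((-1) ^ e * (\<Sum>i\<in>{1..n}. ndcoeff d Q (m - dl i) n))"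
    by (simp add: sum_distrib_left sum_negf)
  also have "\<dots> = - ((-1) ^ e * ((-1) ^ e * Poly_Mapping.lookup p (mono n m) - ndcoeff d Q m n))"
  proof -
    have "(\<Sum>i\<in>{1..n}. ndcoeff d Q (m - dl i) n) = (-1) ^ e * Poly_Mapping.lookup p (mono n m) - ndcoeff d Q m n"
      using eq by linarith
    then show ?thesis by simp
  qed
  also have "\<dots> = - Poly_Mapping.lookup p (mono n m) + Tf d Q n m"
    unfolding Tf_def e_def s_def by (simp add: algebra_simps)
  finally show ?thesis using pn by simp
qed

lemma ndcoeff_cong: "(\<And>i. i \<in> {1..n} \<Longrightarrow> m i = m' i) \<Longrightarrow> ndcoeff d Q m n = ndcoeff d Q m' n"
proof -
  assume h: "\<And>i. i \<in> {1..n} \<Longrightarrow> m i = m' i"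
  have "(\<Sum>i=1..n. m i) = (\<Sum>i=1..n. m' i)" using h by (intro sum.cong) auto
  moreover have "(\<Sum>i=1..n. Poly_Mapping.single i (nat (m i))) = (\<Sum>i=1..n. Poly_Mapping.single i (nat (m' i)))"
    using h by (intro sum.cong) auto
  moreover have "(\<forall>i\<in>{1..n}. m i \<ge> 0) = (\<forall>i\<in>{1..n}. m' i \<ge> 0)" using h by auto
  ultimately show ?thesis unfolding ndcoeff_def by simp
qed

theorem mainTheorem14:
  fixes n d :: nat and p Q :: mpoly
  assumes "n \<in> {2, 3}" and "d \<ge> 1" and "p \<in> Hclass n d"
    and "induced d p = Ssum n * Q"
  shows "(n = 2 \<longrightarrow> (\<forall>z. \<not> overhang2 (K2 d Q) z))
       \<and> (n = 3 \<longrightarrow> (\<forall>m. \<not> overhang3 (K3 d Q) m))"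
proof -
  have R0: "\<And>m. (\<exists>i\<in>{1..n}. m i < 0) \<or> int d \<le> (\<Sum>i\<in>{1..n}. m i) \<Longrightarrow> Tf d Q n m = 0"
    by (rule Tf_R0)
  have R1: "\<And>m. \<forall>i\<in>{1..n}. 0 \<le> m i \<Longrightarrow> (\<Sum>i\<in>{1..n}. m i) \<le> int d \<Longrightarrow> (\<exists>i\<in>{1..n}. m i \<noteq> 0)
               \<Longrightarrow> (\<Sum>i\<in>{1..n}. Tf d Q n (m - dl i)) \<le> Tf d Q n m"
    by (rule Tf_R1[OF assms(3,4)])
  show ?thesis
  proof (intro conjI impI allI)
    fix z :: "int \<times> int" assume n2: "n = 2"
    obtain a b where z: "z = (a, b)" by (cases z)
    define m0 where "m0 = (\<lambda>i::nat. if i = 1 then a else if i = 2 then b else 0)"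
    show "\<not> overhang2 (K2 d Q) z"
    proof
      assume ov: "overhang2 (K2 d Q) z"
      then have "z \<in> K2 d Q" unfolding overhang2_def left_overhang_def right_overhang_def z by auto
      then have T0: "Tf d Q n m0 \<noteq> 0" unfolding Tf_nz z K2_def m0_def n2 by simp
      have I: "{1..n} = {1,2}" using n2 by auto
      have "\<not> overhang2 (K2 d Q) ((\<Sum>i\<in>{1}. m0 i), (\<Sum>i\<in>{2}. m0 i))"
      proof (rule no_overhang_generic[where I="{1..n}" and T="Tf d Q n" and d=d, OF _ _ _ _ _ R0 R1 _ T0])
        fix m assume "Tf d Q n m \<noteq> 0"
        then have "ndcoeff d Q m 2 \<noteq> 0" unfolding Tf_nz n2 .
        moreover have "ndcoeff d Q m 2 = ndcoeff d Q (\<lambda>i. if i = 1 then m 1 else if i = 2 then m 2 else 0) 2"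
          by (rule ndcoeff_cong) (auto simp: numeral_2_eq_2 le_Suc_eq)
        ultimately have "ndcoeff d Q (\<lambda>i. if i = 1 then m 1 else if i = 2 then m 2 else 0) 2 \<noteq> 0"
          by argo
        then have "(m 1, m 2) \<in> K2 d Q" unfolding K2_def by (simp only: mem_Collect_eq case_prod_conv) simp
        then show "((\<Sum>i\<in>{1}. m i), (\<Sum>i\<in>{2}. m i)) \<in> K2 d Q" by simp
      qed (use I in auto)
      then show False using ov z unfolding m0_def by simp
    qed
  next
    fix mm :: "int \<times> int \<times> int" assume n3: "n = 3"
    obtain x y z where mm: "mm = (x, y, z)" by (cases mm)
    define m0 where "m0 = (\<lambda>i::nat. if i = 1 then x else if i = 2 then y else if i = 3 then z else 0)"
    have I: "{1..n} = {1,2,3}" using n3 by auto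
    have gen: "\<not> overhang2 (\<pi> ` K3 d Q) (\<pi> (x, y, z))"
      if AB: "A \<union> B = {1,2,3}" "A \<inter> B = {}" "A \<noteq> {}" "B \<noteq> {}"
        and pi: "\<And>u v w. \<pi> (u, v, w) = ((\<Sum>i\<in>A. (\<lambda>i::nat. if i = 1 then u else if i = 2 then v else if i = 3 then w else 0) i),
                                        (\<Sum>i\<in>B. (\<lambda>i::nat. if i = 1 then u else if i = 2 then v else if i = 3 then w else 0) i))"
        and T0: "Tf d Q n m0 \<noteq> 0"
      for A B and \<pi> :: "int \<times> int \<times> int \<Rightarrow> int \<times> int"
    proof -
      have finA: "finite A" "finite B" using AB by (metis finite.emptyI finite_Un finite_insert)+
      have "\<not> overhang2 (\<pi> ` K3 d Q) ((\<Sum>i\<in>A. m0 i), (\<Sum>i\<in>B. m0 i))"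
      proof (rule no_overhang_generic[where I="{1..n}" and T="Tf d Q n" and d=d, OF _ _ _ _ _ R0 R1 _ T0])
        fix m assume "Tf d Q n m \<noteq> 0"
        then have "ndcoeff d Q m 3 \<noteq> 0" unfolding Tf_nz n3 .
        moreover have "ndcoeff d Q m 3 = ndcoeff d Q (\<lambda>i. if i = 1 then m 1 else if i = 2 then m 2 else if i = 3 then m 3 else 0) 3"
          by (rule ndcoeff_cong) (auto simp: numeral_3_eq_3 numeral_2_eq_2 le_Suc_eq)
        ultimately have "ndcoeff d Q (\<lambda>i. if i = 1 then m 1 else if i = 2 then m 2 else if i = 3 then m 3 else 0) 3 \<noteq> 0"
          by argo
        then have "(m 1, m 2, m 3) \<in> K3 d Q" unfolding K3_def by (simp only: mem_Collect_eq case_prod_conv) simp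
        moreover have "\<pi> (m 1, m 2, m 3) = ((\<Sum>i\<in>A. m i), (\<Sum>i\<in>B. m i))"
          unfolding pi using AB by (auto intro!: sum.cong)
        ultimately show "((\<Sum>i\<in>A. m i), (\<Sum>i\<in>B. m i)) \<in> \<pi> ` K3 d Q" by (metis image_eqI)
      qed (use I AB in auto)
      moreover have "\<pi> (x, y, z) = ((\<Sum>i\<in>A. m0 i), (\<Sum>i\<in>B. m0 i))"
        unfolding pi m0_def by simp
      ultimately show ?thesis by simp
    qed
    show "\<not> overhang3 (K3 d Q) mm"
    proof
      assume ov: "overhang3 (K3 d Q) mm"
      then have "mm \<in> K3 d Q" unfolding overhang3_def by auto
      then have T0: "Tf d Q n m0 \<noteq> 0" unfolding Tf_nz mm K3_def m0_def n3 by simp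
      have p1: "\<not> overhang2 (proj1 ` K3 d Q) (proj1 (x, y, z))"
        by (rule gen[where A="{1}" and B="{2,3}", OF _ _ _ _ _ T0]) (auto simp: proj1_def)
      have p2: "\<not> overhang2 (proj2 ` K3 d Q) (proj2 (x, y, z))"
        by (rule gen[where A="{1,3}" and B="{2}", OF _ _ _ _ _ T0]) (auto simp: proj2_def)
      have p3: "\<not> overhang2 (proj3 ` K3 d Q) (proj3 (x, y, z))"
        by (rule gen[where A="{1,2}" and B="{3}", OF _ _ _ _ _ T0]) (auto simp: proj3_def)
      show False using ov p1 p2 p3 unfolding overhang3_def mm by blast
    qed
  qed
qed
end
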